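(* Every ideal of $\mathcal{A}$ is finitely generated.
   Context: Let $\mathbf{k}$ be a commutative noetherian ring, $r$ a positive integer, and $\mathcal{A}=\bigoplus_{n,d\ge0}(\mathrm{Sym}^d\mathbf{k}^r)^{\otimes n}$, bigraded by $(d,n)$. For a split $\sigma$ of $[n+m]$ (a subset $\{i_1<\cdots<i_n\}$ and its complement $\{j_1<\cdots<j_m\}$), the shuffle product $\cdot_\sigma:(\mathrm{Sym}^d\mathbf{k}^r)^{\otimes n}\otimes(\mathrm{Sym}^d\mathbf{k}^r)^{\otimes m}\to(\mathrm{Sym}^d\mathbf{k}^r)^{\otimes(n+m)}$ puts the factors of the first argument in positions $i_1,\dots,i_n$ and those of the second in positions $j_1,\dots,j_m$. The product $*:(\mathrm{Sym}^d\mathbf{k}^r)^{\otimes n}\otimes(\mathrm{Sym}^e\mathbf{k}^r)^{\otimes n}\to(\mathrm{Sym}^{d+e}\mathbf{k}^r)^{\otimes n}$ is factorwise multiplication. All other products are $0$. An ideal of $\mathcal{A}$ is a bihomogeneous subspace $I$ such that $g*f\in I$ and $g\cdot_\sigma f\in I$ for all $f\in I$, $g\in\mathcal{A}$ and all splits $\sigma$; it is finitely generated if it is the smallest ideal containing some finite subset. *)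

theory Defs
  imports Main
begin

definition ring_ideal :: "'k::comm_ring_1 set \<Rightarrow> bool" where
  "ring_ideal J \<longleftrightarrow> 0 \<in> J \<and> (\<forall>a\<in>J. \<forall>b\<in>J. a + b \<in> J) \<and> (\<forall>c. \<forall>a\<in>J. c * a \<in> J)"

definition ring_ideal_fg :: "'k::comm_ring_1 set \<Rightarrow> bool" where
  "ring_ideal_fg J \<longleftrightarrow> (\<exists>F. finite F \<and> F \<subseteq> J \<and>
      J = {\<Sum>a\<in>F. c a * a | c. True})"

definition noetherian :: "'k::comm_ring_1 itself \<Rightarrow> bool" where
  "noetherian _ \<longleftrightarrow> (\<forall>J::'k set. ring_ideal J \<longrightarrow> ring_ideal_fg J)"

text \<open>(Sym^d k^r)^{\<otimes>n} is the free k-module on n-tuples of monomials of degree d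
  in r variables.  A basis element of A is a pair (d, ms) where ms is a list of
  length n of exponent vectors (lists of length r) each summing to d.\<close>

type_synonym basis = "nat \<times> nat list list"

definition valid_basis :: "nat \<Rightarrow> basis \<Rightarrow> bool" where
  "valid_basis r b \<longleftrightarrow> (\<forall>m\<in>set (snd b). length m = r \<and> sum_list m = fst b)"

definition Aelem :: "nat \<Rightarrow> (basis \<Rightarrow> 'k::comm_ring_1) \<Rightarrow> bool" where
  "Aelem r f \<longleftrightarrow> finite {b. f b \<noteq> 0} \<and> (\<forall>b. f b \<noteq> 0 \<longrightarrow> valid_basis r b)"

definition comp :: "nat \<Rightarrow> nat \<Rightarrow> (basis \<Rightarrow> 'k::comm_ring_1) \<Rightarrow> basis \<Rightarrow> 'k" where
  "comp d n f = (\<lambda>b. if fst b = d \<and> length (snd b) = n then f b else 0)"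

text \<open>bilinear extension of a partial operation on basis elements\<close>
definition conv :: "(basis \<Rightarrow> basis \<Rightarrow> basis option) \<Rightarrow> (basis \<Rightarrow> 'k::comm_ring_1)
    \<Rightarrow> (basis \<Rightarrow> 'k) \<Rightarrow> basis \<Rightarrow> 'k" where
  "conv op g f = (\<lambda>b. \<Sum>p\<in>{(b1, b2). g b1 \<noteq> 0 \<and> f b2 \<noteq> 0 \<and> op b1 b2 = Some b}.
       g (fst p) * f (snd p))"

text \<open>Shuffle of lists along a split: S is the set of (0-based) positions of the
  first list, its complement in {0..<n+m} the positions of the second.\<close>
definition shuffle_lists :: "nat set \<Rightarrow> 'a list \<Rightarrow> 'a list \<Rightarrow> 'a list" where
  "shuffle_lists S xs ys = map (\<lambda>i. if i \<in> S then xs ! card {j\<in>S. j < i}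
       else ys ! card {j. j < i \<and> j \<notin> S}) [0..<length xs + length ys]"

definition is_split :: "nat set \<Rightarrow> nat \<Rightarrow> nat \<Rightarrow> bool" where
  "is_split S n m \<longleftrightarrow> S \<subseteq> {0..<n + m} \<and> card S = n"

text \<open>shuffle product \<cdot>_S on basis elements (zero unless both have the same d
  and S is a split of [n+m])\<close>
definition sh_op :: "nat set \<Rightarrow> basis \<Rightarrow> basis \<Rightarrow> basis option" where
  "sh_op S b1 b2 = (if fst b1 = fst b2 \<and> is_split S (length (snd b1)) (length (snd b2))
       then Some (fst b1, shuffle_lists S (snd b1) (snd b2)) else None)"

definition st_op :: "basis \<Rightarrow> basis \<Rightarrow> basis option" where
  "st_op b1 b2 = (if length (snd b1) = length (snd b2)
       then Some (fst b1 + fst b2, map2 (map2 (+)) (snd b1) (snd b2)) else None)"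

definition A_ideal :: "nat \<Rightarrow> ((basis \<Rightarrow> 'k::comm_ring_1) set) \<Rightarrow> bool" where
  "A_ideal r I \<longleftrightarrow>
     I \<subseteq> {f. Aelem r f} \<and> (\<lambda>_. 0) \<in> I \<and>
     (\<forall>f\<in>I. \<forall>g\<in>I. (\<lambda>b. f b + g b) \<in> I) \<and>
     (\<forall>c. \<forall>f\<in>I. (\<lambda>b. c * f b) \<in> I) \<and>
     (\<forall>f\<in>I. \<forall>d n. comp d n f \<in> I) \<and>
     (\<forall>g f. Aelem r g \<longrightarrow> f \<in> I \<longrightarrow>
        conv st_op g f \<in> I \<and> (\<forall>S. conv (sh_op S) g f \<in> I))"

definition A_ideal_gen :: "nat \<Rightarrow> (basis \<Rightarrow> 'k::comm_ring_1) set \<Rightarrow> (basis \<Rightarrow> 'k) set" where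
  "A_ideal_gen r F = \<Inter>{I. A_ideal r I \<and> F \<subseteq> I}"

definition A_ideal_fg :: "nat \<Rightarrow> (basis \<Rightarrow> 'k::comm_ring_1) set \<Rightarrow> bool" where
  "A_ideal_fg r I \<longleftrightarrow> (\<exists>F. finite F \<and> F \<subseteq> {f. Aelem r f} \<and> I = A_ideal_gen r F)"

end

theory Submission
  imports Defs "HOL-Library.Ramsey" "HOL-Library.Infinite_Set" "HOL-Library.List_Lexorder" "HOL-Library.Product_Lexorder"
begin



definition afull :: "('a \<Rightarrow> 'a \<Rightarrow> bool) \<Rightarrow> 'a set \<Rightarrow> bool" where
  "afull P A \<longleftrightarrow> (\<forall>g::nat \<Rightarrow> 'a. (\<forall>i. g i \<in> A) \<longrightarrow> (\<exists>i j. i < j \<and> P (g i) (g j)))"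

lemma af_chain:
  fixes g :: "nat \<Rightarrow> 'a"
  assumes "afull P A" "\<forall>i. g i \<in> A"
  shows "\<exists>H. infinite H \<and> (\<forall>i\<in>H. \<forall>j\<in>H. i < j \<longrightarrow> P (g i) (g j))"
proof -
  define c where "c X = (if P (g (Min X)) (g (Max X)) then 0 else (1::nat))" for X :: "nat set"
  have "\<forall>x\<in>(UNIV::nat set). \<forall>y\<in>UNIV. x \<noteq> y \<longrightarrow> c {x, y} < 2" unfolding c_def by simp
  from Ramsey2[OF infinite_UNIV_nat this] obtain Y t where
    Y: "infinite Y" "t < 2" "\<forall>x\<in>Y. \<forall>y\<in>Y. x\<noteq>y \<longrightarrow> c {x, y} = t" by blast
  have cxy: "c {x,y} = (if P (g x) (g y) then 0 else 1)" if "x < y" for x y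
  proof -
    have "Min {x,y} = x" "Max {x,y} = y" using that by auto
    then show ?thesis unfolding c_def by simp
  qed
  show ?thesis
  proof (cases "t = 0")
    case True
    have "\<forall>i\<in>Y. \<forall>j\<in>Y. i < j \<longrightarrow> P (g i) (g j)"
    proof (intro ballI impI)
      fix i j assume "i \<in> Y" "j \<in> Y" "i < j"
      then have "c {i, j} = 0" using Y(3) True by (metis less_irrefl)
      then show "P (g i) (g j)" using cxy[OF \<open>i < j\<close>] by (auto split: if_splits)
    qed
    then show ?thesis using Y by blast
  next
    case False
    have "\<forall>i. (g \<circ> enumerate Y) i \<in> A" using assms(2) by simp
    then have "\<exists>i j. i < j \<and> P ((g \<circ> enumerate Y) i) ((g \<circ> enumerate Y) j)"
      using assms(1) unfolding afull_def by blast
    then obtain i j where ij: "i < j" "P (g (enumerate Y i)) (g (enumerate Y j))"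
      by auto
    have lt: "enumerate Y i < enumerate Y j" using enumerate_mono[OF ij(1) Y(1)] .
    have "c {enumerate Y i, enumerate Y j} = t" using Y(3) enumerate_in_set[OF Y(1)] lt by (metis less_irrefl)
    moreover have "c {enumerate Y i, enumerate Y j} = 0" using cxy[OF lt] ij(2) by simp
    ultimately show ?thesis using False by simp
  qed
qed

lemma af_seqI:
  assumes "\<And>g::nat \<Rightarrow> 'a. \<forall>i. g i \<in> A \<Longrightarrow> \<exists>i j. i < j \<and> P (g i) (g j)"
  shows "afull P A" unfolding afull_def using assms by auto

lemma af_map:
  assumes "afull P A" "\<forall>x\<in>B. h x \<in> A" "\<forall>x\<in>B. \<forall>y\<in>B. P (h x) (h y) \<longrightarrow> Q x y"
  shows "afull Q B"
proof (rule af_seqI)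
  fix g :: "nat \<Rightarrow> 'b" assume g: "\<forall>i. g i \<in> B"
  then have "\<forall>i. (h \<circ> g) i \<in> A" using assms(2) by auto
  then have "\<exists>i j. i < j \<and> P ((h \<circ> g) i) ((h \<circ> g) j)"
    using assms(1) unfolding afull_def by blast
  then obtain i j where "i < j" "P (h (g i)) (h (g j))" by auto
  moreover have "Q (g i) (g j)" using assms(3) g calculation(2) by auto
  ultimately show "\<exists>i j. i < j \<and> Q (g i) (g j)" by blast
qed

lemma af_prod:
  assumes "afull P A" "afull Q B"
  shows "afull (\<lambda>x y. P (fst x) (fst y) \<and> Q (snd x) (snd y)) (A \<times> B)"
proof (rule af_seqI)
  fix g :: "nat \<Rightarrow> 'a \<times> 'b" assume g: "\<forall>i. g i \<in> A \<times> B"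
  then have "\<forall>i. (fst \<circ> g) i \<in> A" by (auto simp: mem_Times_iff)
  from af_chain[OF assms(1) this] obtain H where H: "infinite H"
    "\<forall>i\<in>H. \<forall>j\<in>H. i < j \<longrightarrow> P (fst (g i)) (fst (g j))" by auto
  have "\<forall>i. (snd \<circ> g \<circ> enumerate H) i \<in> B" using g by (auto simp: mem_Times_iff)
  then have "\<exists>i j. i < j \<and> Q ((snd \<circ> g \<circ> enumerate H) i) ((snd \<circ> g \<circ> enumerate H) j)"
    using assms(2) unfolding afull_def by blast
  then obtain i j where ij: "i < j" "Q (snd (g (enumerate H i))) (snd (g (enumerate H j)))"
    by auto
  have "enumerate H i < enumerate H j" using enumerate_mono[OF ij(1) H(1)] .
  moreover have "P (fst (g (enumerate H i))) (fst (g (enumerate H j)))"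
    using H(2) enumerate_in_set[OF H(1)] calculation by blast
  ultimately show "\<exists>i j. i < j \<and> P (fst (g i)) (fst (g j)) \<and> Q (snd (g i)) (snd (g j))"
    using ij(2) by blast
qed

lemma af_nat: "afull (\<le>) (UNIV :: nat set)"
proof (rule af_seqI)
  fix g :: "nat \<Rightarrow> nat"
  obtain i where i: "\<forall>j. g i \<le> g j"
    using ex_has_least_nat[of "\<lambda>x. True" g] by blast
  show "\<exists>i j. i < j \<and> g i \<le> g j" using i by (intro exI[of _ i] exI[of _ "Suc i"]) auto
qed

definition le_vec :: "nat list \<Rightarrow> nat list \<Rightarrow> bool" where
  "le_vec xs ys \<longleftrightarrow> list_all2 (\<le>) xs ys"

lemma af_vec: "afull le_vec {xs. length xs = r}"
proof (induction r)
  case 0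
  show ?case
  proof (rule af_seqI)
    fix g :: "nat \<Rightarrow> nat list" assume "\<forall>i. g i \<in> {xs. length xs = 0}"
    then have "g 0 = []" "g 1 = []" by auto
    then show "\<exists>i j. i < j \<and> le_vec (g i) (g j)" by (intro exI[of _ 0] exI[of _ 1]) (simp add: le_vec_def)
  qed
next
  case (Suc r)
  have "afull (\<lambda>x y. fst x \<le> fst y \<and> le_vec (snd x) (snd y)) ((UNIV::nat set) \<times> {xs. length xs = r})"
    using af_prod[OF af_nat Suc.IH] .
  then show ?case
  proof (rule af_map[where h = "\<lambda>xs. (hd xs, tl xs)"])
    show "\<forall>x\<in>{xs. length xs = Suc r}. (hd x, tl x) \<in> UNIV \<times> {xs. length xs = r}" by auto
    show "\<forall>x\<in>{xs. length xs = Suc r}. \<forall>y\<in>{xs. length xs = Suc r}.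
      fst (hd x, tl x) \<le> fst (hd y, tl y) \<and> le_vec (snd (hd x, tl x)) (snd (hd y, tl y)) \<longrightarrow> le_vec x y"
    proof (intro ballI impI)
      fix x y :: "nat list" assume "x \<in> {xs. length xs = Suc r}" "y \<in> {xs. length xs = Suc r}"
        and h: "fst (hd x, tl x) \<le> fst (hd y, tl y) \<and> le_vec (snd (hd x, tl x)) (snd (hd y, tl y))"
      then obtain a x' b y' where "x = a # x'" "y = b # y'" by (auto simp: length_Suc_conv)
      then show "le_vec x y" using h by (simp add: le_vec_def)
    qed
  qed
qed




inductive emb :: "('a \<Rightarrow> 'a \<Rightarrow> bool) \<Rightarrow> 'a list \<Rightarrow> 'a list \<Rightarrow> bool" for P where
  emb_Nil: "emb P [] ys"
| emb_skip: "emb P xs ys \<Longrightarrow> emb P xs (y # ys)"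
| emb_match: "P x y \<Longrightarrow> emb P xs ys \<Longrightarrow> emb P (x # xs) (y # ys)"

definition badseq :: "('a \<Rightarrow> 'a \<Rightarrow> bool) \<Rightarrow> 'a set \<Rightarrow> (nat \<Rightarrow> 'a list) \<Rightarrow> bool" where
  "badseq P A f \<longleftrightarrow> (\<forall>i. f i \<in> lists A) \<and> (\<forall>i j. i < j \<longrightarrow> \<not> emb P (f i) (f j))"

definition extp :: "('a \<Rightarrow> 'a \<Rightarrow> bool) \<Rightarrow> 'a set \<Rightarrow> 'a list list \<Rightarrow> (nat \<Rightarrow> 'a list) \<Rightarrow> bool" where
  "extp P A p g \<longleftrightarrow> badseq P A g \<and> (\<forall>i<length p. g i = p ! i)"

definition chooseW :: "('a \<Rightarrow> 'a \<Rightarrow> bool) \<Rightarrow> 'a set \<Rightarrow> 'a list list \<Rightarrow> 'a list" where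
  "chooseW P A p = (SOME w. \<exists>g. extp P A p g \<and> g (length p) = w \<and>
      (\<forall>g'. extp P A p g' \<longrightarrow> length w \<le> length (g' (length p))))"

fun preS :: "('a \<Rightarrow> 'a \<Rightarrow> bool) \<Rightarrow> 'a set \<Rightarrow> nat \<Rightarrow> 'a list list" where
  "preS P A 0 = []"
| "preS P A (Suc n) = preS P A n @ [chooseW P A (preS P A n)]"

definition mbs :: "('a \<Rightarrow> 'a \<Rightarrow> bool) \<Rightarrow> 'a set \<Rightarrow> nat \<Rightarrow> 'a list" where
  "mbs P A n = preS P A (Suc n) ! n"

lemma length_preS [simp]: "length (preS P A n) = n"
  by (induction n) auto

lemma preS_nth_add: "i < n \<Longrightarrow> preS P A (n + k) ! i = preS P A n ! i"
  by (induction k) (auto simp: nth_append)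

lemma preS_nth: "i < n \<Longrightarrow> preS P A n ! i = mbs P A i"
proof -
  assume "i < n"
  then have "n = Suc i + (n - Suc i)" by simp
  then obtain k where "n = Suc i + k" by blast
  then show ?thesis unfolding mbs_def using preS_nth_add[of i "Suc i" P A k] by simp
qed

lemma choose_ok:
  assumes "\<exists>g. extp P A p g"
  shows "\<exists>g. extp P A p g \<and> g (length p) = chooseW P A p \<and>
      (\<forall>g'. extp P A p g' \<longrightarrow> length (chooseW P A p) \<le> length (g' (length p)))"
proof -
  define L where "L = (LEAST l. \<exists>g. extp P A p g \<and> length (g (length p)) = l)"
  from assms have ex: "\<exists>l g. extp P A p g \<and> length (g (length p)) = l" by blast
  then obtain g0 where g0: "extp P A p g0" "length (g0 (length p)) = L"
    unfolding L_def using LeastI_ex[OF ex] by blast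
  have min: "\<forall>g'. extp P A p g' \<longrightarrow> length (g0 (length p)) \<le> length (g' (length p))"
  proof (intro allI impI)
    fix g' assume "extp P A p g'"
    then have "L \<le> length (g' (length p))" unfolding L_def by (intro Least_le) blast
    then show "length (g0 (length p)) \<le> length (g' (length p))" using g0 by simp
  qed
  have "\<exists>w. \<exists>g. extp P A p g \<and> g (length p) = w \<and>
      (\<forall>g'. extp P A p g' \<longrightarrow> length w \<le> length (g' (length p)))"
    using g0(1) min by blast
  from someI_ex[OF this] show ?thesis unfolding chooseW_def .
qed

lemma ext_preS:
  assumes "\<exists>g. badseq P A g"
  shows "\<exists>g. extp P A (preS P A n) g"
proof (induction n)
  case 0
  then show ?case using assms by (simp add: extp_def)
next
  case (Suc n)
  from choose_ok[OF Suc] obtain g where g: "extp P A (preS P A n) g"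
    "g n = chooseW P A (preS P A n)" by auto
  have "extp P A (preS P A (Suc n)) g"
    using g unfolding extp_def by (auto simp: nth_append less_Suc_eq)
  then show ?case by blast
qed

lemma mbs_bad:
  assumes "\<exists>g. badseq P A g"
  shows "badseq P A (mbs P A)"
  unfolding badseq_def
proof (intro conjI allI impI)
  fix i
  obtain g where g: "extp P A (preS P A (Suc i)) g" using ext_preS[OF assms] by blast
  then have "g i = preS P A (Suc i) ! i" unfolding extp_def by simp
  then have "g i = mbs P A i" using preS_nth[of i "Suc i" P A] by simp
  moreover have "g i \<in> lists A" using g unfolding extp_def badseq_def by blast
  ultimately show "mbs P A i \<in> lists A" by simp
next
  fix i j :: nat assume ij: "i < j"
  obtain g where g: "extp P A (preS P A (Suc j)) g" using ext_preS[OF assms] by blast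
  then have "g i = preS P A (Suc j) ! i" "g j = preS P A (Suc j) ! j"
    unfolding extp_def using ij by simp_all
  then have "g i = mbs P A i" "g j = mbs P A j" using preS_nth[of i "Suc j" P A] preS_nth[of j "Suc j" P A] ij by simp_all
  moreover have "\<not> emb P (g i) (g j)" using g ij unfolding extp_def badseq_def by blast
  ultimately show "\<not> emb P (mbs P A i) (mbs P A j)" by simp
qed

lemma mbs_min:
  assumes "\<exists>g. badseq P A g" "badseq P A g" "\<forall>i<n. g i = mbs P A i"
  shows "length (mbs P A n) \<le> length (g n)"
proof -
  have e: "extp P A (preS P A n) g" unfolding extp_def
  proof (intro conjI allI impI)
    fix i assume "i < length (preS P A n)"
    then show "g i = preS P A n ! i" using assms(3) preS_nth[of i n P A] by simp
  qed (rule assms(2))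
  have "mbs P A n = chooseW P A (preS P A n)" unfolding mbs_def by (simp add: nth_append)
  moreover obtain g1 where
    "\<forall>g'. extp P A (preS P A n) g' \<longrightarrow> length (chooseW P A (preS P A n)) \<le> length (g' (length (preS P A n)))"
    using choose_ok[OF ext_preS[OF assms(1)]] by auto
  then have "length (chooseW P A (preS P A n)) \<le> length (g (length (preS P A n)))" using e by simp
  ultimately show ?thesis by simp
qed

lemma set_tl_sub: "set (tl xs) \<subseteq> set xs" by (cases xs) auto

lemma emb_Nil_all: "emb P [] ys" by (rule emb_Nil)

theorem higman:
  assumes af: "afull P A"
  shows "afull (emb P) (lists A)"
proof (rule ccontr)
  assume "\<not> afull (emb P) (lists A)"
  then have "\<exists>g0::nat \<Rightarrow> 'a list. (\<forall>i. g0 i \<in> lists A) \<and> \<not> (\<exists>i j. i < j \<and> emb P (g0 i) (g0 j))"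
    unfolding afull_def by simp
  then obtain g0 :: "nat \<Rightarrow> 'a list" where "\<forall>i. g0 i \<in> lists A" "\<not> (\<exists>i j. i < j \<and> emb P (g0 i) (g0 j))"
    by auto
  then have "badseq P A g0" unfolding badseq_def by simp
  then have exbad: "\<exists>g. badseq P A g" by blast
  define m where "m = mbs P A"
  have mbad: "badseq P A m" unfolding m_def using mbs_bad[OF exbad] .
  have ne: "m i \<noteq> []" for i
  proof
    assume "m i = []"
    then have "emb P (m i) (m (Suc i))" by (simp add: emb_Nil)
    then show False using mbad unfolding badseq_def by auto
  qed
  have mA: "m i \<in> lists A" for i using mbad unfolding badseq_def by auto
  have hdA: "\<forall>i. (hd \<circ> m) i \<in> A"
  proof
    fix i
    have "hd (m i) \<in> set (m i)" using ne[of i] by (rule hd_in_set)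
    then show "(hd \<circ> m) i \<in> A" using mA[of i] by (auto simp: lists_eq_set)
  qed
  from af_chain[OF af hdA] obtain H where H: "infinite H"
    "\<forall>i\<in>H. \<forall>j\<in>H. i < j \<longrightarrow> P (hd (m i)) (hd (m j))" by auto
  define e where "e = enumerate H"
  define k0 where "k0 = e 0"
  have e_mono: "i < j \<Longrightarrow> e i < e j" for i j unfolding e_def using enumerate_mono H(1) by blast
  have e_in: "e i \<in> H" for i unfolding e_def using enumerate_in_set[OF H(1)] .
  have e_ge: "k0 \<le> e i" for i unfolding k0_def using e_mono[of 0 i] by (cases i) auto
  define g where "g i = (if i < k0 then m i else tl (m (e (i - k0))))" for i
  have gA: "g i \<in> lists A" for i
  proof (cases "i < k0")
    case True then show ?thesis using mA unfolding g_def by simp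
  next
    case False
    have "set (tl (m (e (i - k0)))) \<subseteq> A" using set_tl_sub[of "m (e (i - k0))"] mA[of "e (i - k0)"] by (simp add: lists_eq_set)
    then show ?thesis using False unfolding g_def by (simp add: lists_eq_set)
  qed
  have gnotbad: "\<not> badseq P A g"
  proof
    assume b: "badseq P A g"
    have "\<forall>i<k0. g i = mbs P A i" unfolding g_def m_def by simp
    from mbs_min[OF exbad b this] have "length (m k0) \<le> length (g k0)" unfolding m_def .
    moreover have "g k0 = tl (m k0)" unfolding g_def k0_def by simp
    ultimately show False using ne[of k0] by (cases "m k0") auto
  qed
  then have "\<exists>i j. i < j \<and> emb P (g i) (g j)" using gA unfolding badseq_def by simp
  then obtain i j where ij: "i < j" "emb P (g i) (g j)" by auto
  have cons: "m x = hd (m x) # tl (m x)" for x using ne[of x] by simp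
  show False
  proof (cases "j < k0")
    case True
    then have "emb P (m i) (m j)" using ij unfolding g_def by simp
    then show False using mbad ij(1) unfolding badseq_def by auto
  next
    case jge: False
    show False
    proof (cases "i < k0")
      case True
      then have "emb P (m i) (tl (m (e (j - k0))))" using ij jge unfolding g_def by simp
      then have "emb P (m i) (hd (m (e (j - k0))) # tl (m (e (j - k0))))" by (rule emb_skip)
      then have "emb P (m i) (m (e (j - k0)))" using cons[of "e (j - k0)"] by simp
      moreover have "i < e (j - k0)" using True e_ge[of "j - k0"] by simp
      ultimately show False using mbad unfolding badseq_def by auto
    next
      case False
      then have t: "emb P (tl (m (e (i - k0)))) (tl (m (e (j - k0))))" using ij jge unfolding g_def by simp
      have lt: "e (i - k0) < e (j - k0)" using e_mono ij(1) False jge by simp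
      then have "P (hd (m (e (i - k0)))) (hd (m (e (j - k0))))" using H(2) e_in[of "i - k0"] e_in[of "j - k0"] by simp
      then have "emb P (hd (m (e (i - k0))) # tl (m (e (i - k0)))) (hd (m (e (j - k0))) # tl (m (e (j - k0))))"
        using t by (rule emb_match)
      then have "emb P (m (e (i - k0))) (m (e (j - k0)))" using cons by simp
      then show False using mbad lt unfolding badseq_def by auto
    qed
  qed
qed




definition insR :: "nat \<Rightarrow> nat \<Rightarrow> nat list list \<Rightarrow> nat list list \<Rightarrow> bool" where
  "insR r d ws ws' \<longleftrightarrow> (\<exists>k u. length u = r \<and> sum_list u = d \<and> k \<le> length ws \<and>
      ws' = take k ws @ u # drop k ws)"

definition stepR :: "nat \<Rightarrow> basis \<Rightarrow> basis \<Rightarrow> bool" where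
  "stepR r b b' \<longleftrightarrow> valid_basis r b \<and>
     ((\<exists>ws'. insR r (fst b) (snd b) ws' \<and> b' = (fst b, ws')) \<or>
      (\<exists>c. valid_basis r c \<and> length (snd c) = length (snd b) \<and>
          b' = (fst c + fst b, map2 (map2 (+)) (snd c) (snd b))))"

definition Rb :: "nat \<Rightarrow> basis \<Rightarrow> basis \<Rightarrow> bool" where
  "Rb r = (stepR r)\<^sup>*\<^sup>*"

lemma insR_cons: "insR r d ws ws' \<Longrightarrow> insR r d (x # ws) (x # ws')"
proof -
  assume "insR r d ws ws'"
  then obtain k u where h: "length u = r" "sum_list u = d" "k \<le> length ws"
    "ws' = take k ws @ u # drop k ws" unfolding insR_def by blast
  then have "x # ws' = take (Suc k) (x # ws) @ u # drop (Suc k) (x # ws)" by simp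
  then show ?thesis unfolding insR_def using h by (intro exI[of _ "Suc k"] exI[of _ u]) simp
qed

lemma insR_rtc_cons: "(insR r d)\<^sup>*\<^sup>* ws ws' \<Longrightarrow> (insR r d)\<^sup>*\<^sup>* (x # ws) (x # ws')"
proof (induction rule: rtranclp_induct)
  case base then show ?case by simp
next
  case (step y z)
  then show ?case using insR_cons[OF step(2)] by (simp add: rtranclp.rtrancl_into_rtrancl)
qed

lemma insR_front: "length u = r \<Longrightarrow> sum_list u = d \<Longrightarrow> insR r d v (u # v)"
  unfolding insR_def by (intro exI[of _ 0] exI[of _ u]) simp

lemma insR_valid: "insR r d ws ws' \<Longrightarrow> valid_basis r (d, ws) \<Longrightarrow> valid_basis r (d, ws')"
proof -
  assume a: "insR r d ws ws'" "valid_basis r (d, ws)"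
  then obtain k u where h: "length u = r" "sum_list u = d" "ws' = take k ws @ u # drop k ws"
    unfolding insR_def by blast
  have "set ws' \<subseteq> set ws \<union> {u}" using h(3) set_take_subset[of k ws] set_drop_subset[of k ws] by auto
  then show ?thesis using a(2) h(1,2) unfolding valid_basis_def by auto
qed

lemma insR_rtc_step:
  assumes "(insR r d)\<^sup>*\<^sup>* ws ws'" "valid_basis r (d, ws)"
  shows "(stepR r)\<^sup>*\<^sup>* (d, ws) (d, ws') \<and> valid_basis r (d, ws')"
  using assms(1)
proof (induction rule: rtranclp_induct)
  case base then show ?case using assms(2) by simp
next
  case (step y z)
  then have "stepR r (d, y) (d, z)" unfolding stepR_def by auto
  then show ?case using step insR_valid by (auto simp: rtranclp.rtrancl_into_rtrancl)
qed

lemma exists_below: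
  "d \<le> sum_list y \<Longrightarrow> \<exists>u. length u = length y \<and> list_all2 (\<le>) u y \<and> sum_list u = (d::nat)"
proof (induction y arbitrary: d)
  case Nil then show ?case by simp
next
  case (Cons z y)
  show ?case
  proof (cases "d \<le> z")
    case True
    have "list_all2 (\<le>) (replicate (length y) (0::nat)) y"
      by (induction y) auto
    then show ?thesis using True
      by (intro exI[of _ "d # replicate (length y) 0"]) simp
  next
    case False
    then have "d - z \<le> sum_list y" using Cons.prems by simp
    from Cons.IH[OF this] obtain u where "length u = length y" "list_all2 (\<le>) u y" "sum_list u = d - z"
      by blast
    then show ?thesis using False by (intro exI[of _ "z # u"]) simp
  qed
qed

lemma E0:
  "(\<forall>y\<in>set ys. length y = r \<and> d \<le> sum_list y) \<Longrightarrow>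
   \<exists>v. list_all2 le_vec v ys \<and> (\<forall>x\<in>set v. length x = r \<and> sum_list x = d) \<and> (insR r d)\<^sup>*\<^sup>* [] v"
proof (induction ys)
  case Nil then show ?case by simp
next
  case (Cons y ys)
  then obtain v where v: "list_all2 le_vec v ys" "\<forall>x\<in>set v. length x = r \<and> sum_list x = d"
    "(insR r d)\<^sup>*\<^sup>* [] v" by auto
  from exists_below[of d y] Cons.prems obtain u where u: "length u = length y" "list_all2 (\<le>) u y" "sum_list u = d"
    by auto
  have "length u = r" using u Cons.prems by simp
  then have "(insR r d)\<^sup>*\<^sup>* [] (u # v)" using v(3) insR_front[of u r d v] u(3)
    by (simp add: rtranclp.rtrancl_into_rtrancl)
  then show ?case using v u \<open>length u = r\<close> by (intro exI[of _ "u # v"]) (simp add: le_vec_def[symmetric])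
qed

lemma E:
  assumes "emb le_vec w w'"
  shows "(\<forall>x\<in>set w. length x = r \<and> sum_list x = d) \<Longrightarrow> (\<forall>y\<in>set w'. length y = r \<and> d \<le> sum_list y) \<Longrightarrow>
    \<exists>v. list_all2 le_vec v w' \<and> (\<forall>x\<in>set v. length x = r \<and> sum_list x = d) \<and> (insR r d)\<^sup>*\<^sup>* w v"
  using assms
proof (induction rule: emb.induct)
  case (emb_Nil ys)
  then show ?case using E0 by blast
next
  case (emb_skip xs ys y)
  then obtain v where v: "list_all2 le_vec v ys" "\<forall>x\<in>set v. length x = r \<and> sum_list x = d"
    "(insR r d)\<^sup>*\<^sup>* xs v" by auto
  from exists_below[of d y] emb_skip.prems obtain u where u: "length u = length y" "list_all2 (\<le>) u y" "sum_list u = d"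
    by auto
  have "length u = r" using u emb_skip.prems by simp
  then have "(insR r d)\<^sup>*\<^sup>* xs (u # v)" using v(3) insR_front[of u r d v] u(3)
    by (simp add: rtranclp.rtrancl_into_rtrancl)
  then show ?case using v u \<open>length u = r\<close> by (intro exI[of _ "u # v"]) (simp add: le_vec_def[symmetric])
next
  case (emb_match x y xs ys)
  then obtain v where v: "list_all2 le_vec v ys" "\<forall>x\<in>set v. length x = r \<and> sum_list x = d"
    "(insR r d)\<^sup>*\<^sup>* xs v" by auto
  have "(insR r d)\<^sup>*\<^sup>* (x # xs) (x # v)" using insR_rtc_cons[OF v(3)] .
  then show ?case using v emb_match by (intro exI[of _ "x # v"]) simp
qed

lemma letter_sub:
  "list_all2 (\<le>) x (y::nat list) \<Longrightarrow> length (map2 (-) y x) = length x \<and>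
     sum_list (map2 (-) y x) = sum_list y - sum_list x \<and> map2 (+) (map2 (-) y x) x = y"
proof (induction rule: list_all2_induct)
  case Nil then show ?case by simp
next
  case (Cons a as b bs)
  have le: "sum_list as \<le> sum_list bs" using Cons.hyps(2)
    by (induction rule: list_all2_induct) (auto intro: add_mono)
  have "length (map2 (-) (b # bs) (a # as)) = length (a # as)" using Cons.IH by simp
  moreover have "sum_list (map2 (-) (b # bs) (a # as)) = sum_list (b # bs) - sum_list (a # as)"
    using Cons.IH Cons.hyps(1) le by simp
  moreover have "map2 (+) (map2 (-) (b # bs) (a # as)) (a # as) = b # bs"
    using Cons.IH Cons.hyps(1) by simp
  ultimately show ?case by blast
qed

lemma word_sub:
  "list_all2 le_vec v w' \<Longrightarrow> (\<forall>x\<in>set v. length x = r \<and> sum_list x = d) \<Longrightarrow>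
   (\<forall>y\<in>set w'. length y = r \<and> sum_list y = d') \<Longrightarrow>
   (\<forall>m\<in>set (map2 (map2 (-)) w' v). length m = r \<and> sum_list m = d' - d) \<and>
   length (map2 (map2 (-)) w' v) = length v \<and> map2 (map2 (+)) (map2 (map2 (-)) w' v) v = w'"
proof (induction rule: list_all2_induct)
  case Nil then show ?case by simp
next
  case (Cons a as b bs)
  have "list_all2 (\<le>) a b" using Cons.hyps(1) by (simp add: le_vec_def)
  note L = letter_sub[OF this]
  have IH: "(\<forall>m\<in>set (map2 (map2 (-)) bs as). length m = r \<and> sum_list m = d' - d) \<and>
   length (map2 (map2 (-)) bs as) = length as \<and> map2 (map2 (+)) (map2 (map2 (-)) bs as) as = bs"
    using Cons.IH Cons.prems by simp
  have pa: "length a = r" "sum_list a = d" using Cons.prems(1) by auto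
  have pb: "sum_list b = d'" using Cons.prems(2) by auto
  have "map2 (map2 (-)) (b # bs) (a # as) = map2 (-) b a # map2 (map2 (-)) bs as" by simp
  then show ?case using IH L pa pb by simp
qed

lemma Q_imp_R:
  assumes "valid_basis r (d, w)" "valid_basis r (d', w')" "d \<le> d'" "emb le_vec w w'"
  shows "Rb r (d, w) (d', w')"
proof -
  have a1: "\<forall>x\<in>set w. length x = r \<and> sum_list x = d" using assms(1) by (simp add: valid_basis_def)
  have a2: "\<forall>y\<in>set w'. length y = r \<and> sum_list y = d'" using assms(2) by (simp add: valid_basis_def)
  then have a2': "\<forall>y\<in>set w'. length y = r \<and> d \<le> sum_list y" using assms(3) by simp
  from E[OF assms(4) a1 a2'] obtain v where v: "list_all2 le_vec v w'"
    "\<forall>x\<in>set v. length x = r \<and> sum_list x = d" "(insR r d)\<^sup>*\<^sup>* w v" by blast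
  have s1: "(stepR r)\<^sup>*\<^sup>* (d, w) (d, v)" "valid_basis r (d, v)"
    using insR_rtc_step[OF v(3) assms(1)] by auto
  define c where "c = (d' - d, map2 (map2 (-)) w' v)"
  from word_sub[OF v(1) v(2) a2] have ws:
    "\<forall>m\<in>set (snd c). length m = r \<and> sum_list m = fst c"
    "length (snd c) = length v" "map2 (map2 (+)) (snd c) v = w'" unfolding c_def by auto
  have vc: "valid_basis r c" using ws(1) by (simp add: valid_basis_def)
  have eq: "(d', w') = (fst c + fst (d, v), map2 (map2 (+)) (snd c) (snd (d, v)))"
    using ws(3) assms(3) unfolding c_def by simp
  have "stepR r (d, v) (d', w')" unfolding stepR_def
    using s1(2) ws(2) vc eq by (intro conjI disjI2 exI[of _ c]) simp_all
  then show ?thesis unfolding Rb_def using s1(1) by (simp add: rtranclp.rtrancl_into_rtrancl)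
qed

lemma af_Rb: "afull (Rb r) {b. valid_basis r b}"
proof -
  have "afull (\<lambda>x y. fst x \<le> fst y \<and> emb le_vec (snd x) (snd y))
      ((UNIV::nat set) \<times> lists {xs. length xs = r})"
    using af_prod[OF af_nat higman[OF af_vec]] .
  then show ?thesis
  proof (rule af_map[where h = "\<lambda>b. b"])
    show "\<forall>x\<in>{b. valid_basis r b}. x \<in> UNIV \<times> lists {xs. length xs = r}"
      by (auto simp: valid_basis_def)
    show "\<forall>x\<in>{b. valid_basis r b}. \<forall>y\<in>{b. valid_basis r b}.
        fst x \<le> fst y \<and> emb le_vec (snd x) (snd y) \<longrightarrow> Rb r x y"
    proof (intro ballI impI)
      fix x y assume "x \<in> {b. valid_basis r b}" "y \<in> {b. valid_basis r b}"
        "fst x \<le> fst y \<and> emb le_vec (snd x) (snd y)"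
      then show "Rb r x y" using Q_imp_R[of r "fst x" "snd x" "fst y" "snd y"] by simp
    qed
  qed
qed




definition homogat :: "(basis \<Rightarrow> 'k::comm_ring_1) \<Rightarrow> basis \<Rightarrow> bool" where
  "homogat f b \<longleftrightarrow> (\<forall>x. f x \<noteq> 0 \<longrightarrow> fst x = fst b \<and> length (snd x) = length (snd b))"

definition leadat :: "(basis \<Rightarrow> 'k::comm_ring_1) \<Rightarrow> basis \<Rightarrow> bool" where
  "leadat f b \<longleftrightarrow> (\<forall>x. f x \<noteq> 0 \<longrightarrow> x \<le> b)"

definition delta :: "basis \<Rightarrow> basis \<Rightarrow> 'k::comm_ring_1" where
  "delta b1 = (\<lambda>x. if x = b1 then 1 else 0)"

lemma delta_Aelem: "valid_basis r b1 \<Longrightarrow> Aelem r (delta b1 :: basis \<Rightarrow> 'k::comm_ring_1)"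
proof -
  assume v: "valid_basis r b1"
  have "{b. (delta b1 :: basis \<Rightarrow> 'k) b \<noteq> 0} \<subseteq> {b1}" by (auto simp: delta_def)
  then have "finite {b. (delta b1 :: basis \<Rightarrow> 'k) b \<noteq> 0}" by (rule finite_subset) simp
  then show ?thesis unfolding Aelem_def using v by (auto simp: delta_def split: if_splits)
qed

lemma conv_delta_hit:
  fixes f :: "basis \<Rightarrow> 'k::comm_ring_1"
  assumes inj: "\<forall>x x'. f x \<noteq> 0 \<longrightarrow> f x' \<noteq> 0 \<longrightarrow> op b1 x = Some y \<longrightarrow> op b1 x' = Some y \<longrightarrow> x = x'"
    and fx: "f x \<noteq> 0" and ox: "op b1 x = Some y"
  shows "conv op (delta b1) f y = f x"
proof -
  have one: "(1::'k) \<noteq> 0" using fx by (metis mult_1 mult_zero_left)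
  have e: "{(p1, p2). delta b1 p1 \<noteq> (0::'k) \<and> f p2 \<noteq> 0 \<and> op p1 p2 = Some y} = {(b1, x)}"
  proof (rule set_eqI)
    fix p :: "basis \<times> basis"
    obtain p1 p2 where p: "p = (p1, p2)" by (cases p)
    show "p \<in> {(p1, p2). delta b1 p1 \<noteq> (0::'k) \<and> f p2 \<noteq> 0 \<and> op p1 p2 = Some y} \<longleftrightarrow> p \<in> {(b1, x)}"
    proof
      assume "p \<in> {(p1, p2). delta b1 p1 \<noteq> (0::'k) \<and> f p2 \<noteq> 0 \<and> op p1 p2 = Some y}"
      then have h: "delta b1 p1 \<noteq> (0::'k)" "f p2 \<noteq> 0" "op p1 p2 = Some y" using p by auto
      then have "p1 = b1" by (auto simp: delta_def split: if_splits)
      then have "p2 = x" using inj h fx ox by blast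
      then show "p \<in> {(b1, x)}" using p \<open>p1 = b1\<close> by simp
    next
      assume "p \<in> {(b1, x)}"
      then show "p \<in> {(p1, p2). delta b1 p1 \<noteq> (0::'k) \<and> f p2 \<noteq> 0 \<and> op p1 p2 = Some y}"
        using fx ox one by (simp add: delta_def)
    qed
  qed
  show ?thesis unfolding conv_def e by (simp add: delta_def)
qed

lemma conv_delta_miss:
  fixes f :: "basis \<Rightarrow> 'k::comm_ring_1"
  assumes "\<forall>x. f x \<noteq> 0 \<longrightarrow> op b1 x \<noteq> Some y"
  shows "conv op (delta b1) f y = 0"
proof -
  have e: "{(p1, p2). delta b1 p1 \<noteq> (0::'k) \<and> f p2 \<noteq> 0 \<and> op p1 p2 = Some y} = {}"
    using assms by (auto simp: delta_def split: if_splits)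
  show ?thesis unfolding conv_def e by simp
qed

lemma relabel:
  fixes f :: "basis \<Rightarrow> 'k::comm_ring_1"
  assumes supp: "\<forall>x. f x \<noteq> 0 \<longrightarrow> x \<in> D" and bD: "b \<in> D"
    and op: "\<forall>x\<in>D. op b1 x = Some (h x)"
    and mono: "\<forall>x\<in>D. \<forall>x'\<in>D. x < x' \<longrightarrow> h x < h x'"
    and hom: "\<forall>x\<in>D. fst (h x) = fst (h b) \<and> length (snd (h x)) = length (snd (h b))"
    and ld: "leadat f b"
  shows "homogat (conv op (delta b1) f) (h b) \<and> leadat (conv op (delta b1) f) (h b) \<and>
         conv op (delta b1) f (h b) = f b"
proof -
  have injD: "x = x'" if "x \<in> D" "x' \<in> D" "h x = h x'" for x x'
  proof (rule ccontr)
    assume "x \<noteq> x'"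
    then have "x < x' \<or> x' < x" by auto
    then show False using mono that by (metis less_irrefl)
  qed
  have inj: "\<forall>x x'. f x \<noteq> 0 \<longrightarrow> f x' \<noteq> 0 \<longrightarrow> op b1 x = Some y \<longrightarrow> op b1 x' = Some y \<longrightarrow> x = x'" for y
  proof (intro allI impI)
    fix x x' assume a: "f x \<noteq> 0" "f x' \<noteq> 0" "op b1 x = Some y" "op b1 x' = Some y"
    have "x \<in> D" "x' \<in> D" using a(1,2) supp by blast+
    then have "h x = h x'" using a(3,4) op by simp
    then show "x = x'" using injD \<open>x \<in> D\<close> \<open>x' \<in> D\<close> by blast
  qed
  define f' where "f' = conv op (delta b1) f"
  have hit: "f' (h x) = f x" if "f x \<noteq> 0" for x
    unfolding f'_def using conv_delta_hit[where f=f and op=op and ?b1.0=b1 and y="h x" and x=x, OF inj[of "h x"] that] op supp that by auto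
  have nz: "\<exists>x. f x \<noteq> 0 \<and> y = h x" if "f' y \<noteq> 0" for y
  proof (rule ccontr)
    assume "\<not> ?thesis"
    then have "\<forall>x. f x \<noteq> 0 \<longrightarrow> op b1 x \<noteq> Some y" using op supp by auto
    then have "f' y = 0" unfolding f'_def by (rule conv_delta_miss)
    then show False using that by simp
  qed
  have "homogat f' (h b)" unfolding homogat_def
  proof (intro allI impI)
    fix y assume "f' y \<noteq> 0"
    then obtain x where "f x \<noteq> 0" "y = h x" using nz by blast
    moreover have "x \<in> D" using supp calculation(1) by blast
    ultimately show "fst y = fst (h b) \<and> length (snd y) = length (snd (h b))" using hom by simp
  qed
  moreover have "leadat f' (h b)" unfolding leadat_def
  proof (intro allI impI)
    fix y assume "f' y \<noteq> 0"
    then obtain x where x: "f x \<noteq> 0" "y = h x" using nz by blast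
    then have "x \<le> b" using ld unfolding leadat_def by blast
    then have "x = b \<or> x < b" by auto
    moreover have "x \<in> D" using supp x(1) by blast
    ultimately show "y \<le> h b" using x mono bD by (auto intro: less_imp_le)
  qed
  moreover have "f' (h b) = f b"
  proof (cases "f b = 0")
    case False then show ?thesis using hit by simp
  next
    case True
    show ?thesis
    proof (rule ccontr)
      assume "f' (h b) \<noteq> f b"
      then have "f' (h b) \<noteq> 0" using True by simp
      then obtain x where "f x \<noteq> 0" "h b = h x" using nz by blast
      moreover have "x \<in> D" using supp calculation(1) by blast
      ultimately have "x = b" using injD bD by blast
      then show False using True \<open>f x \<noteq> 0\<close> by simp
    qed
  qed
  ultimately show ?thesis unfolding f'_def by simp
qed




lemma shuffle_single:
  assumes k: "k \<le> length ys"
  shows "shuffle_lists {k} [u] ys = take k ys @ u # drop k ys"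
proof (rule nth_equalityI)
  show "length (shuffle_lists {k} [u] ys) = length (take k ys @ u # drop k ys)"
    using k by (simp add: shuffle_lists_def)
next
  fix i assume "i < length (shuffle_lists {k} [u] ys)"
  then have i: "i < Suc (length ys)" by (simp add: shuffle_lists_def)
  have lhs: "shuffle_lists {k} [u] ys ! i = (if i \<in> {k} then [u] ! card {j\<in>{k}. j < i}
       else ys ! card {j. j < i \<and> j \<notin> {k}})"
    unfolding shuffle_lists_def using i by (simp del: upt_Suc)
  have lt: "length (take k ys) = k" using k by simp
  show "shuffle_lists {k} [u] ys ! i = (take k ys @ u # drop k ys) ! i"
  proof (cases "i = k")
    case True
    have e: "{j. j = k \<and> j < k} = {}" by auto
    have c0: "card {j. j = k \<and> j < k} = 0" unfolding e by simp
    show ?thesis using lhs True lt by (simp add: nth_append c0)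
  next
    case False
    note F = False
    show ?thesis
    proof (cases "i < k")
      case True
      have "{j. j < i \<and> j \<notin> {k}} = {..<i}" using True by auto
      then show ?thesis using lhs F True lt by (simp add: nth_append)
    next
      case False
      then have ik: "k < i" using F by simp
      have "{j. j < i \<and> j \<notin> {k}} = {..<i} - {k}" by auto
      then have c: "card {j. j < i \<and> j \<notin> {k}} = i - 1" using ik by simp
      have "(take k ys @ u # drop k ys) ! i = (u # drop k ys) ! (i - k)"
        using ik lt by (simp add: nth_append)
      also have "\<dots> = drop k ys ! (i - k - 1)" using ik by (cases "i - k") auto
      also have "\<dots> = ys ! (i - 1)" using ik k i by simp
      finally show ?thesis using lhs F c by simp
    qed
  qed
qed

lemma sh_op_single:
  assumes "fst x = d" "k \<le> length (snd x)"
  shows "sh_op {k} (d, [u]) x = Some (d, take k (snd x) @ u # drop k (snd x))"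
  using assms shuffle_single[OF assms(2)] by (simp add: sh_op_def is_split_def)

lemma ins_mono:
  fixes a a' :: "'a::linorder list"
  shows "length a = length a' \<Longrightarrow> k \<le> length a \<Longrightarrow> a < a' \<Longrightarrow>
    take k a @ u # drop k a < take k a' @ u # drop k a'"
proof (induction k arbitrary: a a')
  case 0 then show ?case by simp
next
  case (Suc k)
  then obtain p q p' q' where a: "a = p # q" "a' = p' # q'"
    by (metis Suc_le_length_iff)
  have "p < p' \<or> p = p' \<and> q < q'" using Suc.prems(3) a by simp
  moreover have "length q = length q'" "k \<le> length q" using Suc.prems a by auto
  ultimately show ?case using Suc.IH[of q q'] a by auto
qed

lemma map2_mono:
  fixes F :: "'c \<Rightarrow> 'a::linorder \<Rightarrow> 'b::linorder"
  shows "length xs = length cs \<Longrightarrow> length ys = length cs \<Longrightarrow>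
    (\<forall>c\<in>set cs. \<forall>x\<in>set xs. \<forall>y\<in>set ys. x < y \<longrightarrow> F c x < F c y) \<Longrightarrow> xs < ys \<Longrightarrow>
    map2 F cs xs < map2 F cs ys"
proof (induction cs arbitrary: xs ys)
  case Nil then show ?case by simp
next
  case (Cons c cs)
  then obtain x xs' y ys' where a: "xs = x # xs'" "ys = y # ys'"
    by (metis length_Suc_conv)
  have o: "x < y \<or> x = y \<and> xs' < ys'" using Cons.prems(4) a by simp
  show ?case
  proof (cases "x < y")
    case True
    then have "F c x < F c y" using Cons.prems(3) a by simp
    then show ?thesis using a by simp
  next
    case False
    then have "x = y" "xs' < ys'" using o by auto
    moreover have "map2 F cs xs' < map2 F cs ys'"
      using Cons.IH[of xs' ys'] Cons.prems a calculation(2) by simp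
    ultimately show ?thesis using a by simp
  qed
qed

lemma letter_add_mono:
  fixes c x y :: "nat list"
  assumes "length x = length c" "length y = length c" "x < y"
  shows "map2 (+) c x < map2 (+) c y"
  using map2_mono[of x c y "(+)"] assms by simp

lemma word_add_mono:
  fixes c x y :: "nat list list"
  assumes "length x = length c" "length y = length c" "x < y"
    and "\<forall>m\<in>set c. length m = r" "\<forall>m\<in>set x. length m = r" "\<forall>m\<in>set y. length m = r"
  shows "map2 (map2 (+)) c x < map2 (map2 (+)) c y"
proof (rule map2_mono[OF assms(1,2) _ assms(3)])
  show "\<forall>ca\<in>set c. \<forall>xa\<in>set x. \<forall>ya\<in>set y. xa < ya \<longrightarrow> map2 (+) ca xa < map2 (+) ca ya"
    using letter_add_mono assms(4-6) by auto
qed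




lemma pair_less: "fst x = fst x' \<Longrightarrow> (x < x') = (snd x < snd x')"
  for x x' :: "'a::linorder \<times> 'b::linorder"
  by (cases x, cases x') simp

lemma ideal_conv:
  assumes "A_ideal r J" "f \<in> J" "Aelem r g"
  shows "conv st_op g f \<in> J" "conv (sh_op S) g f \<in> J"
  using assms unfolding A_ideal_def by blast+

lemma ideal_Aelem: "A_ideal r J \<Longrightarrow> f \<in> J \<Longrightarrow> Aelem r f"
  unfolding A_ideal_def by blast

lemma step_lift:
  fixes f :: "basis \<Rightarrow> 'k::comm_ring_1"
  assumes I0: "A_ideal r I0" "f \<in> I0" and st: "stepR r b b'" and hg: "homogat f b" and ld: "leadat f b"
  shows "\<exists>f'. f' \<in> I0 \<and> (\<forall>J. A_ideal r J \<longrightarrow> f \<in> J \<longrightarrow> f' \<in> J) \<and> homogat f' b' \<and> leadat f' b' \<and> f' b' = f b"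
proof -
  have fval: "valid_basis r x" if "f x \<noteq> 0" for x
    using ideal_Aelem[OF I0] that unfolding Aelem_def by blast
  define d where "d = fst b"
  define n where "n = length (snd b)"
  have hx: "fst x = d \<and> length (snd x) = n" if "f x \<noteq> 0" for x
    using hg that unfolding homogat_def d_def n_def by blast
  have vb: "valid_basis r b" using st unfolding stepR_def by blast
  from st consider (ins) ws' where "insR r (fst b) (snd b) ws'" "b' = (fst b, ws')"
    | (add) c where "valid_basis r c" "length (snd c) = length (snd b)"
        "b' = (fst c + fst b, map2 (map2 (+)) (snd c) (snd b))"
    unfolding stepR_def by blast
  then show ?thesis
  proof cases
    case ins
    then obtain k u where ku: "length u = r" "sum_list u = d" "k \<le> n"
      "ws' = take k (snd b) @ u # drop k (snd b)" unfolding insR_def d_def n_def by blast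
    define D where "D = {x::basis. fst x = d \<and> length (snd x) = n}"
    define h where "h x = (d, take k (snd x) @ u # drop k (snd x))" for x :: basis
    define b1 where "b1 = (d, [u])"
    have vb1: "valid_basis r b1" using ku unfolding b1_def valid_basis_def by simp
    have "homogat (conv (sh_op {k}) (delta b1) f) (h b) \<and> leadat (conv (sh_op {k}) (delta b1) f) (h b) \<and>
         conv (sh_op {k}) (delta b1) f (h b) = f b"
    proof (rule relabel)
      show "\<forall>x. f x \<noteq> 0 \<longrightarrow> x \<in> D" using hx unfolding D_def by blast
      show "b \<in> D" unfolding D_def d_def n_def by simp
      show "\<forall>x\<in>D. sh_op {k} b1 x = Some (h x)"
        unfolding D_def h_def b1_def using sh_op_single ku(3) by auto
      show "\<forall>x\<in>D. \<forall>x'\<in>D. x < x' \<longrightarrow> h x < h x'"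
      proof (intro ballI impI)
        fix x x' assume x: "x \<in> D" "x' \<in> D" "x < x'"
        then have "snd x < snd x'" using pair_less[of x x'] unfolding D_def by simp
        then have "take k (snd x) @ u # drop k (snd x) < take k (snd x') @ u # drop k (snd x')"
          using ins_mono[of "snd x" "snd x'" k u] x ku(3) unfolding D_def by simp
        then show "h x < h x'" unfolding h_def by simp
      qed
      show "\<forall>x\<in>D. fst (h x) = fst (h b) \<and> length (snd (h x)) = length (snd (h b))"
        unfolding D_def h_def n_def using ku(3) n_def by auto
      show "leadat f b" by (rule ld)
    qed
    moreover have "h b = b'" unfolding h_def using ins ku d_def by simp
    moreover have "conv (sh_op {k}) (delta b1) f \<in> J" if "A_ideal r J" "f \<in> J" for J
      using ideal_conv(2)[OF that delta_Aelem[OF vb1]] .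
    ultimately show ?thesis using I0 by blast
  next
    case add
    define D where "D = {x::basis. fst x = d \<and> length (snd x) = n \<and> valid_basis r x}"
    define h where "h x = (fst c + fst x, map2 (map2 (+)) (snd c) (snd x))" for x :: basis
    have vc: "\<forall>m\<in>set (snd c). length m = r" using add(1) unfolding valid_basis_def by blast
    have "homogat (conv st_op (delta c) f) (h b) \<and> leadat (conv st_op (delta c) f) (h b) \<and>
         conv st_op (delta c) f (h b) = f b"
    proof (rule relabel)
      show "\<forall>x. f x \<noteq> 0 \<longrightarrow> x \<in> D" using hx fval unfolding D_def by blast
      show "b \<in> D" unfolding D_def d_def n_def using vb by simp
      show "\<forall>x\<in>D. st_op c x = Some (h x)"
        unfolding D_def h_def st_op_def using add(2) n_def by auto
      show "\<forall>x\<in>D. \<forall>x'\<in>D. x < x' \<longrightarrow> h x < h x'"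
      proof (intro ballI impI)
        fix x x' assume x: "x \<in> D" "x' \<in> D" "x < x'"
        then have "snd x < snd x'" using pair_less[of x x'] unfolding D_def by simp
        moreover have "\<forall>m\<in>set (snd x). length m = r" "\<forall>m\<in>set (snd x'). length m = r"
          using x unfolding D_def valid_basis_def by auto
        moreover have "length (snd x) = length (snd c)" "length (snd x') = length (snd c)"
          using x add(2) unfolding D_def n_def by auto
        ultimately have "map2 (map2 (+)) (snd c) (snd x) < map2 (map2 (+)) (snd c) (snd x')"
          using word_add_mono[of "snd x" "snd c" "snd x'" r] vc by simp
        moreover have "fst x = fst x'" using x unfolding D_def by simp
        ultimately show "h x < h x'" unfolding h_def by simp
      qed
      show "\<forall>x\<in>D. fst (h x) = fst (h b) \<and> length (snd (h x)) = length (snd (h b))"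
        unfolding D_def h_def n_def d_def using add(2) by auto
      show "leadat f b" by (rule ld)
    qed
    moreover have "h b = b'" unfolding h_def using add by simp
    moreover have "conv st_op (delta c) f \<in> J" if "A_ideal r J" "f \<in> J" for J
      using ideal_conv(1)[OF that delta_Aelem[OF add(1)]] .
    ultimately show ?thesis using I0 by blast
  qed
qed

lemma lift:
  fixes f :: "basis \<Rightarrow> 'k::comm_ring_1"
  assumes I0: "A_ideal r I0" "f \<in> I0" and R: "Rb r b b'" and hg: "homogat f b" and ld: "leadat f b"
  shows "\<exists>f'. f' \<in> I0 \<and> (\<forall>J. A_ideal r J \<longrightarrow> f \<in> J \<longrightarrow> f' \<in> J) \<and> homogat f' b' \<and> leadat f' b' \<and> f' b' = f b"
  using R[unfolded Rb_def]
proof (induction rule: rtranclp_induct)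
  case base
  then show ?case using I0 hg ld by blast
next
  case (step y z)
  then obtain f1 where f1: "f1 \<in> I0" "\<forall>J. A_ideal r J \<longrightarrow> f \<in> J \<longrightarrow> f1 \<in> J" "homogat f1 y" "leadat f1 y"
    "f1 y = f b" by blast
  from step_lift[OF I0(1) f1(1) step(2) f1(3) f1(4)] obtain f2 where
    f2: "f2 \<in> I0" "\<forall>J. A_ideal r J \<longrightarrow> f1 \<in> J \<longrightarrow> f2 \<in> J" "homogat f2 z" "leadat f2 z" "f2 z = f1 y"
    by blast
  show ?case using f1 f2 by (intro exI[of _ f2]) auto
qed




definition spanK :: "'k::comm_ring_1 set \<Rightarrow> 'k set" where
  "spanK X = {a. \<exists>F c. finite F \<and> F \<subseteq> X \<and> a = (\<Sum>x\<in>F. c x * x)}"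

lemma span_mono: "X \<subseteq> Y \<Longrightarrow> spanK X \<subseteq> spanK Y"
  unfolding spanK_def by blast

lemma span_in: "x \<in> X \<Longrightarrow> x \<in> spanK X"
  unfolding spanK_def by (intro CollectI exI[of _ "{x}"] exI[of _ "\<lambda>_. 1"]) simp

lemma sum_extend:
  fixes c :: "'k \<Rightarrow> 'k::comm_ring_1"
  assumes "finite G" "F \<subseteq> G"
  shows "(\<Sum>x\<in>F. c x * x) = (\<Sum>x\<in>G. (if x \<in> F then c x else 0) * x)"
proof -
  have "(\<Sum>x\<in>F. c x * x) = (\<Sum>x\<in>F. (if x \<in> F then c x else 0) * x)" by simp
  also have "\<dots> = (\<Sum>x\<in>G. (if x \<in> F then c x else 0) * x)"
    using assms by (intro sum.mono_neutral_left) auto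
  finally show ?thesis .
qed

lemma span_ideal: "ring_ideal (spanK X)"
  unfolding ring_ideal_def
proof (intro conjI ballI allI)
  show "0 \<in> spanK X" unfolding spanK_def by (intro CollectI exI[of _ "{}"]) simp
next
  fix a b assume "a \<in> spanK X" "b \<in> spanK X"
  then obtain F c G e where FG: "finite F" "F \<subseteq> X" "a = (\<Sum>x\<in>F. c x * x)"
    "finite G" "G \<subseteq> X" "b = (\<Sum>x\<in>G. e x * x)" unfolding spanK_def by auto
  define c1 where "c1 x = (if x \<in> F then c x else 0)" for x
  define c2 where "c2 x = (if x \<in> G then e x else 0)" for x
  have fu: "finite (F \<union> G)" using FG by simp
  have ea: "a = (\<Sum>x\<in>F \<union> G. c1 x * x)" unfolding c1_def using FG(3) sum_extend[OF fu, of F c] by simp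
  have eb: "b = (\<Sum>x\<in>F \<union> G. c2 x * x)" unfolding c2_def using FG(6) sum_extend[OF fu, of G e] by simp
  have "(\<Sum>x\<in>F \<union> G. (c1 x + c2 x) * x) = (\<Sum>x\<in>F \<union> G. c1 x * x + c2 x * x)"
    by (rule sum.cong) (simp_all add: distrib_right)
  also have "\<dots> = a + b" unfolding ea eb by (rule sum.distrib)
  finally have "a + b = (\<Sum>x\<in>F \<union> G. (c1 x + c2 x) * x)" by simp
  moreover have "F \<union> G \<subseteq> X" using FG by simp
  ultimately show "a + b \<in> spanK X" unfolding spanK_def using fu
    by (intro CollectI exI[of _ "F \<union> G"] exI[of _ "\<lambda>x. c1 x + c2 x"]) simp
next
  fix c a assume "a \<in> spanK X"
  then obtain F e where F: "finite F" "F \<subseteq> X" "a = (\<Sum>x\<in>F. e x * x)" unfolding spanK_def by auto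
  then have "c * a = (\<Sum>x\<in>F. (c * e x) * x)" by (simp add: sum_distrib_left mult.assoc)
  then show "c * a \<in> spanK X" unfolding spanK_def using F
    by (intro CollectI exI[of _ F] exI[of _ "\<lambda>x. c * e x"]) simp
qed

lemma ideal_sum:
  assumes J: "ring_ideal J" and "finite F"
  shows "(\<forall>x\<in>F. x \<in> J) \<Longrightarrow> (\<Sum>x\<in>F. c x * x) \<in> J"
  using assms(2)
proof (induction rule: finite_induct)
  case empty then show ?case using J unfolding ring_ideal_def by simp
next
  case (insert y F)
  have "c y * y \<in> J" using J insert.prems unfolding ring_ideal_def by simp
  moreover have "(\<Sum>x\<in>F. c x * x) \<in> J" using insert by simp
  ultimately show ?case using J insert.hyps unfolding ring_ideal_def by simp
qed

lemma span_sub: "ring_ideal J \<Longrightarrow> X \<subseteq> J \<Longrightarrow> spanK X \<subseteq> J"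
proof
  fix a assume J: "ring_ideal J" "X \<subseteq> J" and "a \<in> spanK X"
  then obtain F c where F: "finite F" "F \<subseteq> X" "a = (\<Sum>x\<in>F. c x * x)" unfolding spanK_def by auto
  show "a \<in> J" using ideal_sum[OF J(1) F(1), of c] F J(2) by auto
qed

lemma noeth_contra:
  fixes a :: "nat \<Rightarrow> 'k::comm_ring_1"
  assumes noeth: "noetherian TYPE('k)" and H: "infinite H"
    and bad: "\<forall>t\<in>H. a t \<notin> spanK (a ` {s\<in>H. s < t})"
  shows False
proof -
  define J where "J = spanK (a ` H)"
  have "ring_ideal J" unfolding J_def by (rule span_ideal)
  then have "ring_ideal_fg J" using noeth unfolding noetherian_def by blast
  then obtain F where F: "finite F" "F \<subseteq> J" "J = {\<Sum>x\<in>F. c x * x | c. True}"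
    unfolding ring_ideal_fg_def by auto
  have "\<exists>N. \<forall>y\<in>F. y \<in> spanK (a ` {s\<in>H. s < N})" using F(1,2)
  proof (induction rule: finite_induct)
    case empty then show ?case by simp
  next
    case (insert y F)
    then obtain N where N: "\<forall>y\<in>F. y \<in> spanK (a ` {s\<in>H. s < N})" by auto
    have "y \<in> spanK (a ` H)" using insert.prems J_def by auto
    then obtain Fy c where Fy: "finite Fy" "Fy \<subseteq> a ` H" "y = (\<Sum>x\<in>Fy. c x * x)"
      unfolding spanK_def by auto
    obtain C where C: "C \<subseteq> H" "finite C" "Fy = a ` C" using finite_subset_image[OF Fy(1,2)] by blast
    obtain M where M: "C \<subseteq> {..<M}" using finite_nat_bounded[OF C(2)] by blast
    have "C \<subseteq> {s\<in>H. s < max N M}" using C M by auto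
    then have "Fy \<subseteq> a ` {s\<in>H. s < max N M}" using C(3) by (simp add: image_mono)
    then have "y \<in> spanK (a ` {s\<in>H. s < max N M})" unfolding spanK_def using Fy
      by (intro CollectI exI[of _ Fy] exI[of _ c]) simp
    moreover have "spanK (a ` {s\<in>H. s < N}) \<subseteq> spanK (a ` {s\<in>H. s < max N M})"
      by (rule span_mono) auto
    ultimately show ?case using N by (intro exI[of _ "max N M"]) auto
  qed
  then obtain N where N: "\<forall>y\<in>F. y \<in> spanK (a ` {s\<in>H. s < N})" by blast
  obtain t where t: "t \<ge> N" "t \<in> H" using H unfolding infinite_nat_iff_unbounded_le by blast
  have sub: "spanK (a ` {s\<in>H. s < N}) \<subseteq> spanK (a ` {s\<in>H. s < t})"
    using t by (intro span_mono) auto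
  have "a t \<in> J" unfolding J_def using t(2) by (intro span_in) simp
  then have "a t \<in> {\<Sum>x\<in>F. c x * x | c. True}" using F(3) by simp
  then obtain c where "a t = (\<Sum>x\<in>F. c x * x)" by auto
  moreover have "\<forall>x\<in>F. x \<in> spanK (a ` {s\<in>H. s < t})" using N sub by auto
  then have "(\<Sum>x\<in>F. c x * x) \<in> spanK (a ` {s\<in>H. s < t})"
    using ideal_sum[OF span_ideal F(1), where c=c] by simp
  ultimately have "a t \<in> spanK (a ` {s\<in>H. s < t})" by simp
  then show False using bad t(2) by blast
qed

fun preC :: "('a \<Rightarrow> bool) \<Rightarrow> ('a set \<Rightarrow> 'a \<Rightarrow> bool) \<Rightarrow> nat \<Rightarrow> 'a list" where
  "preC G Q 0 = []"
| "preC G Q (Suc n) = preC G Q n @ [SOME x. G x \<and> Q (set (preC G Q n)) x]"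

lemma length_preC [simp]: "length (preC G Q n) = n"
  by (induction n) auto

lemma preC_nth_add: "i < n \<Longrightarrow> preC G Q (n + k) ! i = preC G Q n ! i"
  by (induction k) (auto simp: nth_append)

lemma dep_choice:
  assumes step: "\<And>S. finite S \<Longrightarrow> (\<forall>x\<in>S. G x) \<Longrightarrow> \<exists>x. G x \<and> Q S x"
  shows "\<exists>sq::nat \<Rightarrow> 'a. \<forall>n. G (sq n) \<and> Q (sq ` {..<n}) (sq n)"
proof -
  define sq where "sq n = preC G Q (Suc n) ! n" for n
  have nth: "preC G Q n ! i = sq i" if "i < n" for n i
  proof -
    have "n = Suc i + (n - Suc i)" using that by simp
    then obtain k where "n = Suc i + k" by blast
    then show ?thesis unfolding sq_def using preC_nth_add[of i "Suc i" G Q k] by simp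
  qed
  have setp: "set (preC G Q n) = sq ` {..<n}" for n
  proof (induction n)
    case 0 then show ?case by simp
  next
    case (Suc n)
    have "sq n = (SOME x. G x \<and> Q (set (preC G Q n)) x)" unfolding sq_def by (simp add: nth_append)
    then show ?case using Suc by (simp add: lessThan_Suc)
  qed
  have inv: "\<forall>x\<in>set (preC G Q n). G x" for n
  proof (induction n)
    case 0 then show ?case by simp
  next
    case (Suc n)
    have "\<exists>x. G x \<and> Q (set (preC G Q n)) x" by (rule step) (simp_all add: Suc)
    from someI_ex[OF this] show ?case using Suc by simp
  qed
  have all: "G (sq n) \<and> Q (sq ` {..<n}) (sq n)" for n
  proof -
    have "\<exists>x. G x \<and> Q (set (preC G Q n)) x" by (rule step) (simp_all add: inv)
    from someI_ex[OF this] have "G (SOME x. G x \<and> Q (set (preC G Q n)) x) \<and>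
       Q (set (preC G Q n)) (SOME x. G x \<and> Q (set (preC G Q n)) x)" .
    moreover have "sq n = (SOME x. G x \<and> Q (set (preC G Q n)) x)" unfolding sq_def by (simp add: nth_append)
    ultimately show ?thesis using setp by simp
  qed
  show ?thesis by (rule exI[of _ sq], rule allI, rule all)
qed




definition goodp :: "nat \<Rightarrow> (basis \<Rightarrow> 'k::comm_ring_1) set \<Rightarrow> basis \<times> (basis \<Rightarrow> 'k) \<Rightarrow> bool" where
  "goodp r I p \<longleftrightarrow> valid_basis r (fst p) \<and> snd p \<in> I \<and> homogat (snd p) (fst p) \<and> leadat (snd p) (fst p)"

definition lcs :: "nat \<Rightarrow> (basis \<times> (basis \<Rightarrow> 'k::comm_ring_1)) set \<Rightarrow> basis \<Rightarrow> 'k set" where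
  "lcs r G b = {snd p (fst p) | p. p \<in> G \<and> Rb r (fst p) b}"

lemma cover:
  fixes I :: "(basis \<Rightarrow> 'k::comm_ring_1) set"
  assumes noeth: "noetherian TYPE('k)"
  shows "\<exists>G. finite G \<and> (\<forall>p\<in>G. goodp r I p) \<and>
     (\<forall>p. goodp r I p \<longrightarrow> snd p (fst p) \<in> spanK (lcs r G (fst p)))"
proof (rule ccontr)
  assume "\<not> ?thesis"
  then have step: "\<exists>p. goodp r I p \<and> snd p (fst p) \<notin> spanK (lcs r S (fst p))"
    if "finite S" "\<forall>p\<in>S. goodp r I p" for S
    using that by blast
  obtain sq :: "nat \<Rightarrow> basis \<times> (basis \<Rightarrow> 'k)" where
    sq: "\<forall>n. goodp r I (sq n) \<and> snd (sq n) (fst (sq n)) \<notin> spanK (lcs r (sq ` {..<n}) (fst (sq n)))"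
    using dep_choice[where G = "goodp r I" and Q = "\<lambda>S p. snd p (fst p) \<notin> spanK (lcs r S (fst p))"]
      step by blast
  have "\<forall>i. (fst \<circ> sq) i \<in> {b. valid_basis r b}" using sq unfolding goodp_def by simp
  from af_chain[OF af_Rb this] obtain H where H: "infinite H"
    "\<forall>i\<in>H. \<forall>j\<in>H. i < j \<longrightarrow> Rb r (fst (sq i)) (fst (sq j))" by auto
  define a where "a t = snd (sq t) (fst (sq t))" for t
  have "\<forall>t\<in>H. a t \<notin> spanK (a ` {s\<in>H. s < t})"
  proof
    fix t assume t: "t \<in> H"
    have "a ` {s\<in>H. s < t} \<subseteq> lcs r (sq ` {..<t}) (fst (sq t))"
    proof
      fix y assume "y \<in> a ` {s\<in>H. s < t}"
      then obtain s where s: "s \<in> H" "s < t" "y = a s" by auto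
      then have "Rb r (fst (sq s)) (fst (sq t))" using H(2) t by blast
      moreover have "sq s \<in> sq ` {..<t}" using s by simp
      ultimately show "y \<in> lcs r (sq ` {..<t}) (fst (sq t))"
        unfolding lcs_def a_def using s(3) a_def by blast
    qed
    then have "spanK (a ` {s\<in>H. s < t}) \<subseteq> spanK (lcs r (sq ` {..<t}) (fst (sq t)))"
      by (rule span_mono)
    then show "a t \<notin> spanK (a ` {s\<in>H. s < t})" using sq unfolding a_def by blast
  qed
  then show False using noeth_contra[OF noeth H(1)] by blast
qed

lemma zero_in: "A_ideal r J \<Longrightarrow> (\<lambda>_. 0) \<in> J" unfolding A_ideal_def by blast
lemma add_in: "A_ideal r J \<Longrightarrow> f \<in> J \<Longrightarrow> g \<in> J \<Longrightarrow> (\<lambda>b. f b + g b) \<in> J"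
  unfolding A_ideal_def by blast
lemma smul_in: "A_ideal r J \<Longrightarrow> f \<in> J \<Longrightarrow> (\<lambda>b. c * f b) \<in> J"
  unfolding A_ideal_def by blast
lemma comp_in: "A_ideal r J \<Longrightarrow> f \<in> J \<Longrightarrow> comp d n f \<in> J"
  unfolding A_ideal_def by blast

lemma fsum_in:
  assumes J: "A_ideal r J" and "finite Y"
  shows "(\<forall>y\<in>Y. \<phi> y \<in> J) \<Longrightarrow> (\<lambda>b. \<Sum>y\<in>Y. \<phi> y b) \<in> J"
  using assms(2)
proof (induction rule: finite_induct)
  case empty then show ?case using zero_in[OF J] by simp
next
  case (insert x Y)
  have e: "(\<lambda>b. \<Sum>y\<in>insert x Y. \<phi> y b) = (\<lambda>b. \<phi> x b + (\<Sum>y\<in>Y. \<phi> y b))"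
    using insert.hyps by (intro ext) simp
  show ?case unfolding e using add_in[OF J] insert by simp
qed

lemma finite_bideg: "finite {b. valid_basis r b \<and> fst b = d \<and> length (snd b) = n}"
proof -
  define L where "L = {u. set u \<subseteq> {..d} \<and> length u = r}"
  have fL: "finite L" unfolding L_def by (rule finite_lists_length_eq) simp
  have fW: "finite {ws. set ws \<subseteq> L \<and> length ws = n}" by (rule finite_lists_length_eq[OF fL])
  have "{b. valid_basis r b \<and> fst b = d \<and> length (snd b) = n} \<subseteq> {d} \<times> {ws. set ws \<subseteq> L \<and> length ws = n}"
  proof
    fix b :: basis assume b: "b \<in> {b. valid_basis r b \<and> fst b = d \<and> length (snd b) = n}"
    have "set (snd b) \<subseteq> L"
    proof
      fix m assume m: "m \<in> set (snd b)"
      then have "length m = r" "sum_list m = d" using b unfolding valid_basis_def by auto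
      moreover have "set m \<subseteq> {..d}" using member_le_sum_list[of _ m] calculation(2) by auto
      ultimately show "m \<in> L" unfolding L_def by simp
    qed
    then show "b \<in> {d} \<times> {ws. set ws \<subseteq> L \<and> length ws = n}" using b by (cases b) auto
  qed
  then show ?thesis using fW by (rule finite_subset[OF _ finite_cartesian_product[OF finite.insertI[OF finite.emptyI]]])
qed




lemma homog_in:
  fixes I J :: "(basis \<Rightarrow> 'k::comm_ring_1) set"
  assumes I: "A_ideal r I" and J: "A_ideal r J"
    and Gg: "\<forall>p\<in>G. goodp r I p" and GJ: "\<forall>p\<in>G. snd p \<in> J"
    and cov: "\<forall>p. goodp r I p \<longrightarrow> snd p (fst p) \<in> spanK (lcs r G (fst p))"
  shows "f \<in> I \<Longrightarrow> (\<forall>x. f x \<noteq> 0 \<longrightarrow> fst x = d \<and> length (snd x) = n) \<Longrightarrow> f \<in> J"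
proof -
  define X where "X = {b. valid_basis r b \<and> fst b = d \<and> length (snd b) = n}"
  have fX: "finite X" unfolding X_def by (rule finite_bideg)
  define down where "down f = X \<inter> {b. \<exists>x. f x \<noteq> 0 \<and> b \<le> x}" for f :: "basis \<Rightarrow> 'k"
  have main: "\<forall>f. f \<in> I \<longrightarrow> (\<forall>x. f x \<noteq> 0 \<longrightarrow> fst x = d \<and> length (snd x) = n) \<longrightarrow> card (down f) = m \<longrightarrow> f \<in> J"
    for m
  proof (induction m rule: less_induct)
    case (less m)
    show ?case
    proof (intro allI impI)
      fix f assume fI: "f \<in> I" and hom: "\<forall>x. f x \<noteq> 0 \<longrightarrow> fst x = d \<and> length (snd x) = n"
        and cm: "card (down f) = m"
      have Af: "Aelem r f" using ideal_Aelem[OF I fI] .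
      show "f \<in> J"
      proof (cases "\<forall>x. f x = 0")
        case True
        then have "f = (\<lambda>_. 0)" by (intro ext) (rule True[rule_format])
        then show ?thesis using zero_in[OF J] by simp
      next
        case False
        define S where "S = {x. f x \<noteq> 0}"
        have fS: "finite S" using Af unfolding Aelem_def S_def by blast
        have neS: "S \<noteq> {}" using False unfolding S_def by blast
        define lm where "lm = Max S"
        have lmS: "f lm \<noteq> 0" using Max_in[OF fS neS] unfolding lm_def S_def by simp
        have lead: "leadat f lm" unfolding leadat_def lm_def
          using Max_ge[OF fS] unfolding S_def by blast
        have hlm: "fst lm = d" "length (snd lm) = n" using hom lmS by blast+
        have homf: "homogat f lm" unfolding homogat_def using hom hlm by simp
        have vlm: "valid_basis r lm" using Af lmS unfolding Aelem_def by blast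
        have "goodp r I (lm, f)" unfolding goodp_def using vlm fI homf lead by simp
        then have "snd (lm, f) (fst (lm, f)) \<in> spanK (lcs r G (fst (lm, f)))" using cov by blast
        then have "f lm \<in> spanK (lcs r G lm)" by simp
        then obtain Fs cc where Fs: "finite Fs" "Fs \<subseteq> lcs r G lm" "f lm = (\<Sum>y\<in>Fs. cc y * y)"
          unfolding spanK_def by auto
        have "\<forall>y\<in>Fs. \<exists>g. g \<in> I \<and> g \<in> J \<and> homogat g lm \<and> leadat g lm \<and> g lm = y"
        proof
          fix y assume "y \<in> Fs"
          then have "y \<in> lcs r G lm" using Fs(2) by blast
          then obtain p where p: "y = snd p (fst p)" "p \<in> G" "Rb r (fst p) lm" unfolding lcs_def by blast
          have gp: "snd p \<in> I" "homogat (snd p) (fst p)" "leadat (snd p) (fst p)"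
            using Gg p(2) unfolding goodp_def by auto
          from lift[OF I gp(1) p(3) gp(2) gp(3)] obtain g where
            g: "g \<in> I" "\<forall>J. A_ideal r J \<longrightarrow> snd p \<in> J \<longrightarrow> g \<in> J" "homogat g lm" "leadat g lm"
              "g lm = snd p (fst p)" by blast
          have "g \<in> J" using g(2) J GJ p(2) by blast
          then show "\<exists>g. g \<in> I \<and> g \<in> J \<and> homogat g lm \<and> leadat g lm \<and> g lm = y"
            using g p(1) by blast
        qed
        from bchoice[OF this] obtain gg where gg: "\<forall>y\<in>Fs. gg y \<in> I \<and> gg y \<in> J \<and> homogat (gg y) lm \<and> leadat (gg y) lm \<and> gg y lm = y"
          by blast
        define h where "h b = (\<Sum>y\<in>Fs. cc y * gg y b)" for b
        have hI: "h \<in> I" unfolding h_def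
          using fsum_in[OF I Fs(1), of "\<lambda>y b. cc y * gg y b"] smul_in[OF I] gg by simp
        have hJ: "h \<in> J" unfolding h_def
          using fsum_in[OF J Fs(1), of "\<lambda>y b. cc y * gg y b"] smul_in[OF J] gg by simp
        have hlmv: "h lm = f lm" unfolding h_def Fs(3) using gg by simp
        have hsupp: "x \<le> lm \<and> fst x = d \<and> length (snd x) = n" if "h x \<noteq> 0" for x
        proof -
          have "\<exists>y\<in>Fs. cc y * gg y x \<noteq> 0"
          proof (rule ccontr)
            assume "\<not> ?thesis"
            then have "h x = 0" unfolding h_def by (intro sum.neutral) blast
            then show False using that by simp
          qed
          then obtain y where y: "y \<in> Fs" "cc y * gg y x \<noteq> 0" by blast
          then have gx: "gg y x \<noteq> 0" by auto
          have "homogat (gg y) lm" "leadat (gg y) lm" using gg y(1) by auto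
          then have "fst x = fst lm \<and> length (snd x) = length (snd lm)" "x \<le> lm"
            using gx unfolding homogat_def leadat_def by blast+
          then show ?thesis using hlm by simp
        qed
        define f' where "f' b = f b + (-1) * h b" for b
        have f'I: "f' \<in> I" unfolding f'_def using add_in[OF I fI smul_in[OF I hI, of "-1"]] by (simp only:)
        have f'lm: "f' lm = 0" unfolding f'_def using hlmv by simp
        have f'supp: "x < lm \<and> fst x = d \<and> length (snd x) = n" if "f' x \<noteq> 0" for x
        proof -
          have "f x \<noteq> 0 \<or> h x \<noteq> 0" using that unfolding f'_def by auto
          moreover have "x \<le> lm \<and> fst x = d \<and> length (snd x) = n" if "f x \<noteq> 0"
          proof -
            have "x \<le> lm" using lead that unfolding leadat_def by blast
            moreover have "fst x = d \<and> length (snd x) = n" using hom that by blast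
            ultimately show ?thesis by simp
          qed
          ultimately have "x \<le> lm \<and> fst x = d \<and> length (snd x) = n"
            using hsupp by blast
          moreover have "x \<noteq> lm" using that f'lm by auto
          ultimately show ?thesis by auto
        qed
        have hom': "\<forall>x. f' x \<noteq> 0 \<longrightarrow> fst x = d \<and> length (snd x) = n" using f'supp by blast
        have sub1: "down f' \<subseteq> X \<inter> {b. b < lm}"
          unfolding down_def using f'supp by (auto intro: le_less_trans)
        have sub2: "X \<inter> {b. b < lm} \<subseteq> down f"
        proof
          fix b assume "b \<in> X \<inter> {b. b < lm}"
          then have "b \<in> X" "b \<le> lm" by auto
          then show "b \<in> down f" unfolding down_def using lmS by blast
        qed
        have "lm \<in> X" unfolding X_def using vlm hlm by simp
        then have lmX: "lm \<in> down f" unfolding down_def using lmS by blast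
        have "down f' \<subset> down f" using sub1 sub2 lmX by auto
        moreover have "finite (down f)" unfolding down_def using fX by simp
        ultimately have "card (down f') < m" using cm psubset_card_mono by blast
        then have f'J: "f' \<in> J" using less.IH f'I hom' by blast
        have "f = (\<lambda>b. f' b + h b)" unfolding f'_def by (intro ext) simp
        then show ?thesis using add_in[OF J f'J hJ] by simp
      qed
    qed
  qed
  assume "f \<in> I" "\<forall>x. f x \<noteq> 0 \<longrightarrow> fst x = d \<and> length (snd x) = n"
  then show "f \<in> J" using main by blast
qed

lemma decompose:
  fixes I J :: "(basis \<Rightarrow> 'k::comm_ring_1) set"
  assumes I: "A_ideal r I" and J: "A_ideal r J"
    and hom: "\<And>f d n. f \<in> I \<Longrightarrow> (\<forall>x. f x \<noteq> 0 \<longrightarrow> fst x = d \<and> length (snd x) = n) \<Longrightarrow> f \<in> J"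
  shows "I \<subseteq> J"
proof
  fix f assume fI: "f \<in> I"
  define Dg where "Dg = (\<lambda>x. (fst x, length (snd x))) ` {x. f x \<noteq> 0}"
  have fD: "finite Dg" using ideal_Aelem[OF I fI] unfolding Dg_def Aelem_def by simp
  have "\<forall>q\<in>Dg. comp (fst q) (snd q) f \<in> J"
  proof
    fix q assume "q \<in> Dg"
    have "comp (fst q) (snd q) f \<in> I" using comp_in[OF I fI] .
    moreover have "\<forall>x. comp (fst q) (snd q) f x \<noteq> 0 \<longrightarrow> fst x = fst q \<and> length (snd x) = snd q"
      unfolding comp_def by auto
    ultimately show "comp (fst q) (snd q) f \<in> J" using hom by blast
  qed
  then have sJ: "(\<lambda>b. \<Sum>q\<in>Dg. comp (fst q) (snd q) f b) \<in> J"
    using fsum_in[OF J fD, where \<phi> = "\<lambda>q. comp (fst q) (snd q) f"] by simp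
  have "(\<lambda>b. \<Sum>q\<in>Dg. comp (fst q) (snd q) f b) = f"
  proof
    fix b
    have "(\<Sum>q\<in>Dg. comp (fst q) (snd q) f b) = (\<Sum>q\<in>Dg. if q = (fst b, length (snd b)) then f b else 0)"
      by (rule sum.cong) (auto simp: comp_def)
    also have "\<dots> = (if (fst b, length (snd b)) \<in> Dg then f b else 0)"
      using sum.delta[OF fD, of "(fst b, length (snd b))" "\<lambda>_. f b"] by simp
    also have "\<dots> = f b" unfolding Dg_def by auto
    finally show "(\<Sum>q\<in>Dg. comp (fst q) (snd q) f b) = f b" .
  qed
  then show "f \<in> J" using sJ by simp
qed

theorem corollary2p9:
  fixes r :: nat and I :: "(basis \<Rightarrow> 'k::comm_ring_1) set"
  assumes "noetherian TYPE('k)"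
    and "r > 0"
    and "A_ideal r I"
  shows "A_ideal_fg r I"
proof -
  obtain G where G: "finite G" "\<forall>p\<in>G. goodp r I p"
    "\<forall>p. goodp r I p \<longrightarrow> snd p (fst p) \<in> spanK (lcs r G (fst p))"
    using cover[OF assms(1)] by blast
  define F where "F = snd ` G"
  have FI: "F \<subseteq> I" using G(2) unfolding F_def goodp_def by auto
  have fF: "finite F" unfolding F_def using G(1) by simp
  have FA: "F \<subseteq> {f. Aelem r f}" using FI ideal_Aelem[OF assms(3)] by blast
  have "I = A_ideal_gen r F"
  proof
    show "A_ideal_gen r F \<subseteq> I" unfolding A_ideal_gen_def using assms(3) FI by blast
  next
    show "I \<subseteq> A_ideal_gen r F" unfolding A_ideal_gen_def
    proof (rule Inter_greatest)
      fix J assume "J \<in> {J. A_ideal r J \<and> F \<subseteq> J}"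
      then have J: "A_ideal r J" "F \<subseteq> J" by auto
      have GJ: "\<forall>p\<in>G. snd p \<in> J" using J(2) unfolding F_def by auto
      show "I \<subseteq> J"
        by (rule decompose[OF assms(3) J(1)]) (rule homog_in[OF assms(3) J(1) G(2) GJ G(3)])
    qed
  qed
  then show ?thesis unfolding A_ideal_fg_def using fF FA by blast
qed


end
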